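(* The Hilbert calculus ${\bf Tm4d}$ is sound and complete with respect to the Nmatrix $\mathcal M_{\bf Tm4d}$: for every $\Gamma\cup\{\alpha\}\subseteq For$, $\Gamma\vdash_{\bf Tm4d}\alpha$ iff $\Gamma\vDash_{\mathcal M_{\bf Tm4d}}\alpha$.
   Context: Formulas are built from a denumerable set of propositional variables by the unary connectives $\neg$, $\Box$ and the binary connective $\to$; $For$ is the set of all formulas. Abbreviations: $\Diamond\alpha:=\neg\Box\neg\alpha$, $\alpha\vee\beta:=\neg\alpha\to\beta$. ${\bf Tm4d}$ is the Hilbert calculus whose axioms are all instances (over $For$) of the axiom schemas of a standard Hilbert calculus for classical propositional logic in the signature $\{\neg,\to\}$, plus all instances of: (K) $\Box(\alpha\to\beta)\to(\Box\alpha\to\Box\beta)$; (Kdet) $\Box(\alpha\to\beta)\to(\Diamond\alpha\to\Box\beta)$; (K2) $\Diamond(\alpha\to\beta)\to(\Box\alpha\to\Diamond\beta)$; (M1) $\neg\Diamond\alpha\to\Box(\alpha\to\beta)$; (M2) $\Box\beta\to\Box(\alpha\to\beta)$; (M3) $\Diamond\beta\to\Diamond(\alpha\to\beta)$; (M4) $\Diamond\neg\alpha\to\Diamond(\alpha\to\beta)$; (T) $\Box\alpha\to\alpha$; (DN1) $\Box\alpha\to\Box\neg\neg\alpha$; (DN2) $\Box\neg\neg\alpha\to\Box\alpha$; (4) $\Box\alpha\to\Box\Box\alpha$; modus ponens is the only rule. Nmatrix semantics: an Nmatrix has a domain $A$, designated values $D\subseteq A$ and, for each connective, a multioperation giving nonempty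 subsets of $A$; a valuation is $v:For\to A$ with $v(\neg\alpha)\in\tilde\neg(v(\alpha))$, $v(\Box\alpha)\in\tilde\Box(v(\alpha))$, $v(\alpha\to\beta)\in v(\alpha)\tilde\to v(\beta)$; $\Gamma\vDash\alpha$ iff every valuation designating all of $\Gamma$ designates $\alpha$. $\mathcal M_{\bf Tm4d}$: domain $\{T^+,C^+,C^-,F^-\}$, designated $\{T^+,C^+\}$; $\tilde\neg T^+=\{F^-\}$, $\tilde\neg C^+=\{C^-\}$, $\tilde\neg C^-=\{C^+\}$, $\tilde\neg F^-=\{T^+\}$; $\tilde\Box T^+=\{T^+\}$ and $\tilde\Box x=\{C^-,F^-\}$ for $x\neq T^+$; implication is deterministic: $x\tilde\to y=\{\max(n(x),y)\}$, where $n(T^+)=F^-$, $n(C^+)=C^-$, $n(C^-)=C^+$, $n(F^-)=T^+$ and the maximum is taken in the chain $F^-<C^-<C^+<T^+$. *)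

theory Defs
  imports Main
begin

datatype fm = Var nat | Neg fm | Box fm | Imp fm fm

definition Dia :: "fm \<Rightarrow> fm" where "Dia a = Neg (Box (Neg a))"

inductive axiom :: "fm \<Rightarrow> bool" where
  A1: "axiom (Imp a (Imp b a))"
| A2: "axiom (Imp (Imp a (Imp b c)) (Imp (Imp a b) (Imp a c)))"
| A3: "axiom (Imp (Imp (Neg b) (Neg a)) (Imp (Imp (Neg b) a) b))"
| K: "axiom (Imp (Box (Imp a b)) (Imp (Box a) (Box b)))"
| Kdet: "axiom (Imp (Box (Imp a b)) (Imp (Dia a) (Box b)))"
| K2: "axiom (Imp (Dia (Imp a b)) (Imp (Box a) (Dia b)))"
| M1: "axiom (Imp (Neg (Dia a)) (Box (Imp a b)))"
| M2: "axiom (Imp (Box b) (Box (Imp a b)))"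
| M3: "axiom (Imp (Dia b) (Dia (Imp a b)))"
| M4: "axiom (Imp (Dia (Neg a)) (Dia (Imp a b)))"
| T: "axiom (Imp (Box a) a)"
| DN1: "axiom (Imp (Box a) (Box (Neg (Neg a))))"
| DN2: "axiom (Imp (Box (Neg (Neg a))) (Box a))"
| Four: "axiom (Imp (Box a) (Box (Box a)))"

inductive derivable :: "fm set \<Rightarrow> fm \<Rightarrow> bool" where
  Prem: "a \<in> \<Gamma> \<Longrightarrow> derivable \<Gamma> a"
| Ax: "axiom a \<Longrightarrow> derivable \<Gamma> a"
| MP: "derivable \<Gamma> a \<Longrightarrow> derivable \<Gamma> (Imp a b) \<Longrightarrow> derivable \<Gamma> b"

datatype tv = Tp | Cp | Cm | Fm

definition designated :: "tv set" where "designated = {Tp, Cp}"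

fun negM :: "tv \<Rightarrow> tv set" where
  "negM Tp = {Fm}" | "negM Cp = {Cm}" | "negM Cm = {Cp}" | "negM Fm = {Tp}"

fun boxM :: "tv \<Rightarrow> tv set" where
  "boxM Tp = {Tp}" | "boxM x = {Cm, Fm}"

fun rank :: "tv \<Rightarrow> nat" where
  "rank Fm = 0" | "rank Cm = 1" | "rank Cp = 2" | "rank Tp = 3"

fun nfun :: "tv \<Rightarrow> tv" where
  "nfun Tp = Fm" | "nfun Cp = Cm" | "nfun Cm = Cp" | "nfun Fm = Tp"

definition tmax :: "tv \<Rightarrow> tv \<Rightarrow> tv" where
  "tmax x y = (if rank x \<le> rank y then y else x)"

definition impM :: "tv \<Rightarrow> tv \<Rightarrow> tv set" where
  "impM x y = {tmax (nfun x) y}"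

definition valuation :: "(fm \<Rightarrow> tv) \<Rightarrow> bool" where
  "valuation v \<longleftrightarrow> (\<forall>a. v (Neg a) \<in> negM (v a)) \<and> (\<forall>a. v (Box a) \<in> boxM (v a))
     \<and> (\<forall>a b. v (Imp a b) \<in> impM (v a) (v b))"

definition entails :: "fm set \<Rightarrow> fm \<Rightarrow> bool" where
  "entails \<Gamma> a \<longleftrightarrow> (\<forall>v. valuation v \<longrightarrow> (\<forall>g\<in>\<Gamma>. v g \<in> designated) \<longrightarrow> v a \<in> designated)"

end

theory Submission
  imports Defs
begin

section \<open>Soundness\<close>

lemma val_neg: "valuation v \<Longrightarrow> v (Neg a) = nfun (v a)"
proof -
  assume "valuation v"
  then have "v (Neg a) \<in> negM (v a)" unfolding valuation_def by blast
  then show ?thesis by (cases "v a") auto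
qed

lemma val_imp: "valuation v \<Longrightarrow> v (Imp a b) = tmax (nfun (v a)) (v b)"
  unfolding valuation_def impM_def by auto

lemma val_box: "valuation v \<Longrightarrow> v (Box a) \<in> boxM (v a)"
  unfolding valuation_def by auto

lemma boxM_cases: "y \<in> boxM x \<Longrightarrow> (x = Tp \<and> y = Tp) \<or> (x \<noteq> Tp \<and> (y = Cm \<or> y = Fm))"
  by (cases x) auto

lemma sound_ax:
  assumes v: "valuation v" and ax: "axiom a"
  shows "v a \<in> designated"
  using ax
proof cases
  case (A1 a b) then show ?thesis using v
    by (cases "v a"; cases "v b") (auto simp: val_imp tmax_def designated_def)
next
  case (A2 a b c) then show ?thesis using v
    by (cases "v a"; cases "v b"; cases "v c") (auto simp: val_imp tmax_def designated_def)
next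
  case (A3 b a) then show ?thesis using v
    by (cases "v a"; cases "v b") (auto simp: val_imp val_neg tmax_def designated_def)
next
  case (K a b) then show ?thesis using v boxM_cases[OF val_box[OF v, of a]]
      boxM_cases[OF val_box[OF v, of b]] boxM_cases[OF val_box[OF v, of "Imp a b"]]
    by (cases "v a"; cases "v b") (auto simp: val_imp tmax_def designated_def)
next
  case (Kdet a b) then show ?thesis using v boxM_cases[OF val_box[OF v, of "Neg a"]]
      boxM_cases[OF val_box[OF v, of b]] boxM_cases[OF val_box[OF v, of "Imp a b"]]
    by (cases "v a"; cases "v b") (auto simp: Dia_def val_neg val_imp tmax_def designated_def)
next
  case (K2 a b) then show ?thesis using v boxM_cases[OF val_box[OF v, of "Neg b"]]
      boxM_cases[OF val_box[OF v, of a]] boxM_cases[OF val_box[OF v, of "Neg (Imp a b)"]]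
    by (cases "v a"; cases "v b") (auto simp: Dia_def val_neg val_imp tmax_def designated_def)
next
  case (M1 a b) then show ?thesis using v boxM_cases[OF val_box[OF v, of "Neg a"]]
      boxM_cases[OF val_box[OF v, of "Imp a b"]]
    by (cases "v a"; cases "v b") (auto simp: Dia_def val_neg val_imp tmax_def designated_def)
next
  case (M2 b a) then show ?thesis using v boxM_cases[OF val_box[OF v, of b]]
      boxM_cases[OF val_box[OF v, of "Imp a b"]]
    by (cases "v a"; cases "v b") (auto simp: Dia_def val_neg val_imp tmax_def designated_def)
next
  case (M3 b a) then show ?thesis using v boxM_cases[OF val_box[OF v, of "Neg b"]]
      boxM_cases[OF val_box[OF v, of "Neg (Imp a b)"]]
    by (cases "v a"; cases "v b") (auto simp: Dia_def val_neg val_imp tmax_def designated_def)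
next
  case (M4 a b) then show ?thesis using v boxM_cases[OF val_box[OF v, of "Neg (Neg a)"]]
      boxM_cases[OF val_box[OF v, of "Neg (Imp a b)"]]
    by (cases "v a"; cases "v b") (auto simp: Dia_def val_neg val_imp tmax_def designated_def)
next
  case (T a) then show ?thesis using v boxM_cases[OF val_box[OF v, of a]]
    by (cases "v a") (auto simp: val_imp tmax_def designated_def)
next
  case (DN1 a) then show ?thesis using v boxM_cases[OF val_box[OF v, of a]]
      boxM_cases[OF val_box[OF v, of "Neg (Neg a)"]]
    by (cases "v a") (auto simp: val_neg val_imp tmax_def designated_def)
next
  case (DN2 a) then show ?thesis using v boxM_cases[OF val_box[OF v, of a]]
      boxM_cases[OF val_box[OF v, of "Neg (Neg a)"]]
    by (cases "v a") (auto simp: val_neg val_imp tmax_def designated_def)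
next
  case (Four a) then show ?thesis using v boxM_cases[OF val_box[OF v, of a]]
      boxM_cases[OF val_box[OF v, of "Box a"]]
    by (cases "v a") (auto simp: val_imp tmax_def designated_def)
qed

lemma sound_aux: "derivable G a \<Longrightarrow> valuation v \<Longrightarrow> \<forall>g\<in>G. v g \<in> designated \<Longrightarrow> v a \<in> designated"
proof (induction rule: derivable.induct)
  case Prem then show ?case by blast
next
  case Ax then show ?case using sound_ax by blast
next
  case (MP \<Gamma> a b) then show ?case
    by (cases "v a"; cases "v b") (auto simp: val_imp tmax_def designated_def)
qed

lemma soundness: "derivable G a \<Longrightarrow> entails G a"
  unfolding entails_def using sound_aux by blast

section \<open>Hilbert calculus facts\<close>

lemma dmono: "derivable G a \<Longrightarrow> G \<subseteq> H \<Longrightarrow> derivable H a"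
  by (induction rule: derivable.induct) (auto intro: derivable.intros)

lemma dax: "axiom a \<Longrightarrow> derivable G a" by (rule derivable.Ax)

lemma dmp: "derivable G a \<Longrightarrow> derivable G (Imp a b) \<Longrightarrow> derivable G b"
  by (rule derivable.MP)

lemma dI: "derivable G (Imp a a)"
proof -
  have 1: "derivable G (Imp (Imp a (Imp (Imp a a) a)) (Imp (Imp a (Imp a a)) (Imp a a)))"
    by (rule dax, rule axiom.A2)
  have 2: "derivable G (Imp a (Imp (Imp a a) a))" by (rule dax, rule axiom.A1)
  have 3: "derivable G (Imp a (Imp a a))" by (rule dax, rule axiom.A1)
  show ?thesis using dmp[OF 3 dmp[OF 2 1]] .
qed

lemma DT_aux: "derivable H b \<Longrightarrow> H = insert a G \<Longrightarrow> derivable G (Imp a b)"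
proof (induction rule: derivable.induct)
  case (Prem b \<Gamma>)
  show ?case
  proof (cases "b = a")
    case True then show ?thesis using dI by simp
  next
    case False then have "b \<in> G" using Prem by auto
    then show ?thesis using dmp[OF derivable.Prem dax[OF axiom.A1]] by blast
  qed
next
  case (Ax b \<Gamma>) then show ?case using dmp[OF dax dax[OF axiom.A1]] by blast
next
  case (MP \<Gamma> c b)
  have "derivable G (Imp (Imp a (Imp c b)) (Imp (Imp a c) (Imp a b)))" by (rule dax, rule axiom.A2)
  then show ?case using MP.IH MP.prems dmp by metis
qed

lemma DT: "derivable (insert a G) b \<Longrightarrow> derivable G (Imp a b)"
  using DT_aux by blast

lemma DTr: "derivable G (Imp a b) \<Longrightarrow> derivable (insert a G) b"
proof -
  assume "derivable G (Imp a b)"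
  then have "derivable (insert a G) (Imp a b)" using dmono[OF _ subset_insertI] by blast
  moreover have "derivable (insert a G) a" by (rule derivable.Prem, simp)
  ultimately show ?thesis using dmp by blast
qed

lemma dA1: "derivable G a \<Longrightarrow> derivable G (Imp b a)"
  by (erule dmp, rule dax, rule axiom.A1)

lemma dA3: "derivable G (Imp (Neg b) (Neg a)) \<Longrightarrow> derivable G (Imp (Neg b) a) \<Longrightarrow> derivable G b"
proof -
  assume 1: "derivable G (Imp (Neg b) (Neg a))" and 2: "derivable G (Imp (Neg b) a)"
  have "derivable G (Imp (Imp (Neg b) (Neg a)) (Imp (Imp (Neg b) a) b))" by (rule dax, rule axiom.A3)
  then show ?thesis using dmp[OF 2 dmp[OF 1]] by blast
qed

lemma dnegE: "derivable G (Imp (Neg (Neg b)) b)"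
proof -
  let ?H = "insert (Neg (Neg b)) G"
  have "derivable ?H (Imp (Neg b) (Neg (Neg b)))" by (rule dA1, rule derivable.Prem, simp)
  moreover have "derivable ?H (Imp (Neg b) (Neg b))" by (rule dI)
  ultimately have "derivable ?H b" by (rule dA3)
  then show ?thesis by (rule DT)
qed

lemma efq: "derivable G (Neg a) \<Longrightarrow> derivable G a \<Longrightarrow> derivable G b"
proof -
  assume 1: "derivable G (Neg a)" and 2: "derivable G a"
  show ?thesis by (rule dA3[OF dA1[OF 1] dA1[OF 2]])
qed

lemma dcontra: "derivable G (Imp a b) \<Longrightarrow> derivable G (Imp (Neg b) (Neg a))"
proof -
  assume ab: "derivable G (Imp a b)"
  let ?H = "insert (Neg b) G"
  have "derivable ?H (Imp (Neg (Neg a)) (Neg b))" by (rule dA1, rule derivable.Prem, simp)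
  moreover have "derivable ?H (Imp (Neg (Neg a)) b)"
  proof -
    let ?K = "insert (Neg (Neg a)) ?H"
    have 1: "derivable ?K (Imp (Neg (Neg a)) a)" by (rule dnegE)
    have 2: "derivable ?K (Neg (Neg a))" by (rule derivable.Prem, simp)
    have 3: "derivable ?K (Imp a b)" by (rule dmono[OF ab], blast)
    have "derivable ?K b" by (rule dmp[OF dmp[OF 2 1] 3])
    then show ?thesis by (rule DT)
  qed
  ultimately have "derivable ?H (Neg a)" by (rule dA3)
  then show ?thesis by (rule DT)
qed

lemma dcontra2: "derivable G (Imp (Neg a) b) \<Longrightarrow> derivable G (Imp (Neg b) a)"
proof -
  assume ab: "derivable G (Imp (Neg a) b)"
  let ?H = "insert (Neg b) G"
  have "derivable ?H (Imp (Neg a) (Neg b))" by (rule dA1, rule derivable.Prem, simp)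
  moreover have "derivable ?H (Imp (Neg a) b)" by (rule dmono[OF ab], blast)
  ultimately have "derivable ?H a" by (rule dA3)
  then show ?thesis by (rule DT)
qed

lemma dcases: "derivable G (Imp a b) \<Longrightarrow> derivable G (Imp (Neg a) b) \<Longrightarrow> derivable G b"
  by (rule dA3[OF dcontra dcontra2])

lemma compact: "derivable G a \<Longrightarrow> \<exists>S. finite S \<and> S \<subseteq> G \<and> derivable S a"
proof (induction rule: derivable.induct)
  case (Prem a \<Gamma>) then show ?case by (intro exI[of _ "{a}"]) (auto intro: derivable.Prem)
next
  case (Ax a \<Gamma>) then show ?case by (intro exI[of _ "{}"]) (auto intro: derivable.Ax)
next
  case (MP \<Gamma> a b)
  then obtain S1 S2 where "finite S1" "S1 \<subseteq> \<Gamma>" "derivable S1 a" "finite S2" "S2 \<subseteq> \<Gamma>" "derivable S2 (Imp a b)"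
    by blast
  moreover have "derivable (S1 \<union> S2) a" using dmono[of S1 a "S1 \<union> S2"] calculation by blast
  moreover have "derivable (S1 \<union> S2) (Imp a b)" using dmono[of S2 "Imp a b" "S1 \<union> S2"] calculation by blast
  ultimately show ?case using dmp[of "S1 \<union> S2" a b] by (intro exI[of _ "S1 \<union> S2"]) blast
qed

section \<open>Lindenbaum\<close>

definition mcs :: "fm set \<Rightarrow> fm \<Rightarrow> bool" where
  "mcs D a \<longleftrightarrow> \<not> derivable D a \<and> (\<forall>p. p \<notin> D \<longrightarrow> derivable (insert p D) a)"

lemma lindenbaum:
  assumes "\<not> derivable G a"
  shows "\<exists>D. G \<subseteq> D \<and> mcs D a"
proof -
  let ?A = "{D. \<not> derivable (G \<union> D) a}"
  have "\<forall>C\<in>chains ?A. \<Union>C \<in> ?A"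
  proof
    fix C assume C: "C \<in> chains ?A"
    show "\<Union>C \<in> ?A"
    proof (cases "C = {}")
      case True then show ?thesis using assms by simp
    next
      case False
      show ?thesis
      proof (rule ccontr)
        assume "\<Union>C \<notin> ?A"
        then have "derivable (G \<union> \<Union>C) a" by simp
        then obtain S where S: "finite S" "S \<subseteq> G \<union> \<Union>C" "derivable S a" using compact by blast
        have fin: "finite (S - G)" and sub: "S - G \<subseteq> \<Union>C" using S by auto
        have ch: "subset.chain ?A C" using C by (simp add: chains_alt_def)
        obtain B where B: "B \<in> C" "S - G \<subseteq> B"
          using finite_subset_Union_chain[OF fin sub False ch] by blast
        have "S \<subseteq> G \<union> B" using B by blast
        then have "derivable (G \<union> B) a" using dmono[OF S(3)] by blast
        moreover have "B \<in> ?A" using B(1) C unfolding chains_def by blast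
        ultimately show False by simp
      qed
    qed
  qed
  then obtain M where M: "M \<in> ?A" "\<forall>X\<in>?A. M \<subseteq> X \<longrightarrow> X = M" using Zorn_Lemma[of ?A] by blast
  have "G \<union> M \<in> ?A" using M(1) by (simp add: Un_assoc[symmetric])
  then have GM: "G \<union> M = M" using M(2) by blast
  have "mcs M a"
    unfolding mcs_def
  proof (intro conjI allI impI)
    show "\<not> derivable M a" using M(1) GM by simp
  next
    fix p assume p: "p \<notin> M"
    have "insert p M \<notin> ?A"
    proof
      assume "insert p M \<in> ?A"
      then have "insert p M = M" using M(2) by blast
      then show False using p by blast
    qed
    then show "derivable (insert p M) a" using GM by (metis (no_types, lifting) Un_insert_right mem_Collect_eq)
  qed
  then show ?thesis using GM by blast
qed

lemma mcs_closed: "mcs D a \<Longrightarrow> derivable D p \<Longrightarrow> p \<in> D"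
  unfolding mcs_def using DT dmp by blast

lemma mcs_neg: assumes m: "mcs D a" shows "Neg p \<in> D \<longleftrightarrow> p \<notin> D"
proof
  assume "Neg p \<in> D"
  then show "p \<notin> D" using m efq[of D p a] derivable.Prem unfolding mcs_def by blast
next
  assume p: "p \<notin> D"
  show "Neg p \<in> D"
  proof (rule ccontr)
    assume "Neg p \<notin> D"
    then have "derivable D (Imp (Neg p) a)" "derivable D (Imp p a)" using m p DT unfolding mcs_def by blast+
    then show False using dcases m unfolding mcs_def by blast
  qed
qed

lemma mcs_imp: assumes m: "mcs D a" shows "Imp p q \<in> D \<longleftrightarrow> (p \<notin> D \<or> q \<in> D)"
proof
  assume "Imp p q \<in> D"
  then show "p \<notin> D \<or> q \<in> D" using m mcs_closed dmp derivable.Prem by metis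
next
  assume "p \<notin> D \<or> q \<in> D"
  then show "Imp p q \<in> D"
  proof
    assume "p \<notin> D"
    then have "Neg p \<in> D" using mcs_neg[OF m] by blast
    then have "derivable (insert p D) q"
      using efq[of "insert p D" p q] derivable.Prem by blast
    then show ?thesis using DT mcs_closed[OF m] by blast
  next
    assume "q \<in> D"
    then show ?thesis using dA1 derivable.Prem mcs_closed[OF m] by blast
  qed
qed

lemma mcs_ax: "mcs D a \<Longrightarrow> axiom p \<Longrightarrow> p \<in> D"
  using mcs_closed derivable.Ax by blast

context
  fixes D a assumes m: "mcs D a"
begin

lemma mT: "Box p \<in> D \<Longrightarrow> p \<in> D"
  using mcs_ax[OF m axiom.T[of p]] by (simp add: mcs_imp[OF m])
lemma m4: "Box p \<in> D \<Longrightarrow> Box (Box p) \<in> D"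
  using mcs_ax[OF m axiom.Four[of p]] by (simp add: mcs_imp[OF m])
lemma mDN: "Box (Neg (Neg p)) \<in> D \<longleftrightarrow> Box p \<in> D"
  using mcs_ax[OF m axiom.DN1[of p]] mcs_ax[OF m axiom.DN2[of p]] by (auto simp: mcs_imp[OF m])
lemma mM1: "Box (Neg p) \<in> D \<Longrightarrow> Box (Imp p q) \<in> D"
  using mcs_ax[OF m axiom.M1[of p q]] by (simp add: Dia_def mcs_imp[OF m] mcs_neg[OF m])
lemma mM2: "Box q \<in> D \<Longrightarrow> Box (Imp p q) \<in> D"
  using mcs_ax[OF m axiom.M2[of q p]] by (simp add: mcs_imp[OF m])
lemma mKdet: "Box (Imp p q) \<in> D \<Longrightarrow> Box (Neg p) \<notin> D \<Longrightarrow> Box q \<in> D"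
  using mcs_ax[OF m axiom.Kdet[of p q]] by (simp add: Dia_def mcs_imp[OF m] mcs_neg[OF m])
lemma mK2: "Box p \<in> D \<Longrightarrow> Box (Neg q) \<in> D \<Longrightarrow> Box (Neg (Imp p q)) \<in> D"
  using mcs_ax[OF m axiom.K2[of p q]] by (simp add: Dia_def mcs_imp[OF m] mcs_neg[OF m])
lemma mM3: "Box (Neg (Imp p q)) \<in> D \<Longrightarrow> Box (Neg q) \<in> D"
  using mcs_ax[OF m axiom.M3[of q p]] by (simp add: Dia_def mcs_imp[OF m] mcs_neg[OF m])
lemma mM4: "Box (Neg (Imp p q)) \<in> D \<Longrightarrow> Box (Neg (Neg p)) \<in> D"
  using mcs_ax[OF m axiom.M4[of p q]] by (simp add: Dia_def mcs_imp[OF m] mcs_neg[OF m])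

definition V :: "fm \<Rightarrow> tv" where
  "V p = (if p \<in> D then (if Box p \<in> D then Tp else Cp) else (if Box (Neg p) \<in> D then Fm else Cm))"

lemma V_valuation: "valuation V"
  unfolding valuation_def
proof (intro conjI allI)
  fix p
  show "V (Neg p) \<in> negM (V p)"
    unfolding V_def by (auto simp: mcs_neg[OF m] mDN)
next
  fix p
  show "V (Box p) \<in> boxM (V p)"
    unfolding V_def using m4[of p] mT[of p] by auto
next
  fix p q
  show "V (Imp p q) \<in> impM (V p) (V q)"
    using mT[of p] mT[of q] mT[of "Neg p"] mT[of "Neg q"] mM1[of p q] mM2[of q p] mKdet[of p q]
      mK2[of p q] mM3[of p q] mM4[of p q] mDN[of p] mT[of "Imp p q"] mT[of "Neg (Imp p q)"]
    by (cases "p \<in> D"; cases "q \<in> D"; cases "Box p \<in> D"; cases "Box q \<in> D";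
        cases "Box (Neg p) \<in> D"; cases "Box (Neg q) \<in> D"; cases "Box (Imp p q) \<in> D";
        cases "Box (Neg (Imp p q)) \<in> D")
       (simp_all add: V_def impM_def tmax_def mcs_imp[OF m] mcs_neg[OF m])
qed

end

lemma completeness: "entails G a \<Longrightarrow> derivable G a"
proof (rule ccontr)
  assume e: "entails G a" and n: "\<not> derivable G a"
  obtain D where D: "G \<subseteq> D" "mcs D a" using lindenbaum[OF n] by blast
  have "a \<notin> D" using D(2) derivable.Prem unfolding mcs_def by blast
  then have "V D a \<notin> designated" unfolding V_def[OF D(2)] designated_def by auto
  moreover have "\<forall>g\<in>G. V D g \<in> designated" using D unfolding V_def[OF D(2)] designated_def by auto
  ultimately show False using e V_valuation[OF D(2)] unfolding entails_def by blast
qed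

theorem mainTheorem7:
  shows "derivable \<Gamma> \<alpha> \<longleftrightarrow> entails \<Gamma> \<alpha>"
  using soundness completeness by blast

end
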